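(* In $\mathrm{OPT}_\tau$, every loop whose entry points lie on $C_{\tau+1}$ (the bottom cover-line of $S_\tau$) either exclusively covers a top segment, or is a cover-line loop. The analogous statement holds for loops with entry points on $C_\tau$ (with bottom segments in place of top segments).
   Context: Instance: vertical line segments in $\mathbb{R}^2$, each of length $1$, with pairwise distinct $x$-coordinates; the minimal bounding box has height $H>3$. A tour is a cyclic sequence of points, each on some segment, with each segment containing one of them; consecutive points are joined by straight legs; cost is total length. $\mathrm{OPT}$ is a fixed oriented minimum-cost tour with no two consecutive points on the same segment and not self-crossing. Cover-lines: horizontal lines $C_1,C_2,\dots$ (top to bottom) spaced $1$ apart, $C_1$ through the bottom tip of the top-most segment; a segment is covered by the top-most cover-line intersecting it. Strip $S_\tau$: closed region between $C_\tau$ and $C_{\tau+1}$; top segments of $S_\tau$: those intersecting $C_\tau$; bottom segments: those covered by $C_{\tau+1}$. $\mathrm{OPT}_\tau$: restriction of $\mathrm{OPT}$ to $S_\tau$ (points added where legs meet the cover-lines), a collection of subpaths each with two entry points on the cover-lines; a loop has both entry points on the same cover-line. A cover-line loop is a loop that enters $S_\tau$ at a point of a cover-line, travels along that cover-line and exits. A segment $s$ in $S_\tau$ is exclusively covered by a path $P$ of $\mathrm{OPT}_\tau$ if $P$ intersects $s$ and no other path of $\mathrm{OPT}_\tau$ intersects $s$. *)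

theory Defs
  imports "HOL-Analysis.Analysis"
begin

type_synonym pt = "real \<times> real"

text \<open>A vertical segment of length 1 is represented by its bottom endpoint (x, y);
  it consists of the points (x, y + t) with 0 <= t <= 1.\<close>
definition seg :: "pt \<Rightarrow> pt set" where
  "seg s = {(fst s, snd s + t) | t. 0 \<le> t \<and> t \<le> 1}"

definition instance_ok :: "pt set \<Rightarrow> bool" where
  "instance_ok I \<longleftrightarrow> finite I \<and> I \<noteq> {} \<and> inj_on fst I"

definition height :: "pt set \<Rightarrow> real" where
  "height I = (Max (snd ` I) + 1) - Min (snd ` I)"

text \<open>y-coordinate of cover-line C_k (k >= 1); C_1 passes through the bottom tip
  of the top-most segment, consecutive cover-lines are spaced 1 apart.\<close>
definition cover_y :: "pt set \<Rightarrow> nat \<Rightarrow> real" where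
  "cover_y I k = Max (snd ` I) - (real k - 1)"

definition cover_line :: "pt set \<Rightarrow> nat \<Rightarrow> pt set" where
  "cover_line I k = {p. snd p = cover_y I k}"

definition covered_by :: "pt set \<Rightarrow> pt \<Rightarrow> nat \<Rightarrow> bool" where
  "covered_by I s k \<longleftrightarrow> k \<ge> 1 \<and> seg s \<inter> cover_line I k \<noteq> {} \<and>
     (\<forall>j. 1 \<le> j \<and> j < k \<longrightarrow> seg s \<inter> cover_line I j = {})"

definition strip :: "pt set \<Rightarrow> nat \<Rightarrow> pt set" where
  "strip I \<tau> = {p. cover_y I (\<tau> + 1) \<le> snd p \<and> snd p \<le> cover_y I \<tau>}"

definition top_seg :: "pt set \<Rightarrow> nat \<Rightarrow> pt \<Rightarrow> bool" where
  "top_seg I \<tau> s \<longleftrightarrow> s \<in> I \<and> seg s \<inter> cover_line I \<tau> \<noteq> {}"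

definition bottom_seg :: "pt set \<Rightarrow> nat \<Rightarrow> pt \<Rightarrow> bool" where
  "bottom_seg I \<tau> s \<longleftrightarrow> s \<in> I \<and> covered_by I s (\<tau> + 1)"

definition is_tour :: "pt set \<Rightarrow> pt list \<Rightarrow> bool" where
  "is_tour I ps \<longleftrightarrow> ps \<noteq> [] \<and> (\<forall>p\<in>set ps. \<exists>s\<in>I. p \<in> seg s) \<and>
     (\<forall>s\<in>I. \<exists>p\<in>set ps. p \<in> seg s)"

definition nxt :: "pt list \<Rightarrow> nat \<Rightarrow> pt" where
  "nxt ps i = ps ! ((i + 1) mod length ps)"

definition tour_cost :: "pt list \<Rightarrow> real" where
  "tour_cost ps = (\<Sum>i<length ps. dist (ps ! i) (nxt ps i))"

definition legs_cross :: "pt \<Rightarrow> pt \<Rightarrow> pt \<Rightarrow> pt \<Rightarrow> bool" where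
  "legs_cross p q r s \<longleftrightarrow> (\<exists>z. closed_segment p q \<inter> closed_segment r s = {z} \<and>
      z \<noteq> p \<and> z \<noteq> q \<and> z \<noteq> r \<and> z \<noteq> s)"

definition is_OPT :: "pt set \<Rightarrow> pt list \<Rightarrow> bool" where
  "is_OPT I ps \<longleftrightarrow> is_tour I ps \<and> (\<forall>qs. is_tour I qs \<longrightarrow> tour_cost ps \<le> tour_cost qs) \<and>
     (\<forall>i<length ps. \<forall>s\<in>I. \<not> (ps ! i \<in> seg s \<and> nxt ps i \<in> seg s)) \<and>
     (\<forall>i<length ps. \<forall>j<length ps. i \<noteq> j \<longrightarrow>
        \<not> legs_cross (ps ! i) (nxt ps i) (ps ! j) (nxt ps j))"

text \<open>The closed polygonal curve of the tour, parametrised periodically with period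
  length ps; on [i, i+1] it traverses the leg from ps!i to its successor.\<close>
definition tour_curve :: "pt list \<Rightarrow> real \<Rightarrow> pt" where
  "tour_curve ps t = (let n = real (length ps); u = t - n * of_int \<lfloor>t / n\<rfloor>;
      i = nat \<lfloor>u\<rfloor>; r = u - real i in (1 - r) *\<^sub>R (ps ! i) + r *\<^sub>R nxt ps i)"

text \<open>A path of the restriction of the tour to a region S: a maximal parameter interval
  [a,b] whose image lies in S (normalised by 0 <= a < length ps).  Its entry points are
  tour_curve ps a and tour_curve ps b.\<close>
definition restr_path :: "pt list \<Rightarrow> pt set \<Rightarrow> real \<Rightarrow> real \<Rightarrow> bool" where
  "restr_path ps S a b \<longleftrightarrow> 0 \<le> a \<and> a < real (length ps) \<and> a \<le> b \<and>
     tour_curve ps ` {a..b} \<subseteq> S \<and>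
     (\<forall>a' b'. a' \<le> a \<and> b \<le> b' \<and> tour_curve ps ` {a'..b'} \<subseteq> S \<longrightarrow> a' = a \<and> b' = b)"

definition excl_covers :: "pt list \<Rightarrow> pt set \<Rightarrow> real \<Rightarrow> real \<Rightarrow> pt \<Rightarrow> bool" where
  "excl_covers ps S a b s \<longleftrightarrow> tour_curve ps ` {a..b} \<inter> seg s \<noteq> {} \<and>
     (\<forall>a' b'. restr_path ps S a' b' \<and> a' \<noteq> a \<longrightarrow> tour_curve ps ` {a'..b'} \<inter> seg s = {})"

definition loop_on :: "pt list \<Rightarrow> pt set \<Rightarrow> real \<Rightarrow> real \<Rightarrow> bool" where
  "loop_on ps L a b \<longleftrightarrow> tour_curve ps a \<in> L \<and> tour_curve ps b \<in> L"

definition cover_line_loop :: "pt list \<Rightarrow> pt set \<Rightarrow> real \<Rightarrow> real \<Rightarrow> bool" where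
  "cover_line_loop ps L a b \<longleftrightarrow> loop_on ps L a b \<and> tour_curve ps ` {a..b} \<subseteq> L"

end

theory Submission
  imports Defs
begin

lemma floor_mod_aux:
  fixes t :: real and n :: nat
  assumes "n > 0"
  shows "\<lfloor>t - real n * of_int \<lfloor>t / real n\<rfloor>\<rfloor> = \<lfloor>t\<rfloor> mod int n"
proof -
  let ?q = "\<lfloor>t / real n\<rfloor>"
  have e: "real n * of_int ?q = of_int (int n * ?q)" by simp
  have f: "\<lfloor>t - real n * of_int ?q\<rfloor> = \<lfloor>t\<rfloor> - int n * ?q"
    unfolding e by (rule floor_diff_of_int)
  have q: "\<lfloor>t\<rfloor> div int n = ?q"
    using floor_divide_real_eq_div[of "int n" t] by simp
  show ?thesis unfolding f using q by (metis minus_div_mult_eq_mod mult.commute)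
qed

lemma nat_mod_suc_aux:
  assumes "n > 0"
  shows "(nat (x mod int n) + 1) mod n = nat ((x + 1) mod int n)"
proof -
  have "int ((nat (x mod int n) + 1) mod n) = (x mod int n + 1) mod int n"
    using assms by (simp add: zmod_int add.commute)
  also have "\<dots> = (x + 1) mod int n" by (metis mod_add_left_eq)
  finally show ?thesis by (metis nat_int)
qed

lemma curve_floor:
  assumes "ps \<noteq> []"
  shows "tour_curve ps t = (1 - (t - of_int \<lfloor>t\<rfloor>)) *\<^sub>R ps ! nat (\<lfloor>t\<rfloor> mod int (length ps))
     + (t - of_int \<lfloor>t\<rfloor>) *\<^sub>R ps ! nat ((\<lfloor>t\<rfloor> + 1) mod int (length ps))"
proof -
  define n where "n = length ps"
  have n: "n > 0" using assms n_def by simp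
  define u where "u = t - real n * of_int \<lfloor>t / real n\<rfloor>"
  have fu: "\<lfloor>u\<rfloor> = \<lfloor>t\<rfloor> mod int n" unfolding u_def using floor_mod_aux[OF n] .
  have nn: "0 \<le> \<lfloor>t\<rfloor> mod int n" using n by simp
  have r: "u - real (nat \<lfloor>u\<rfloor>) = t - of_int \<lfloor>t\<rfloor>"
  proof -
    have e: "real n * of_int \<lfloor>t / real n\<rfloor> = of_int (int n * \<lfloor>t / real n\<rfloor>)" by simp
    have "\<lfloor>u\<rfloor> = \<lfloor>t\<rfloor> - int n * \<lfloor>t / real n\<rfloor>"
      unfolding u_def e by (rule floor_diff_of_int)
    hence "(of_int \<lfloor>u\<rfloor> :: real) = of_int \<lfloor>t\<rfloor> - real n * of_int \<lfloor>t / real n\<rfloor>"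
      by simp
    moreover have "real (nat \<lfloor>u\<rfloor>) = of_int \<lfloor>u\<rfloor>" using fu nn by simp
    ultimately show ?thesis unfolding u_def by linarith
  qed
  have d: "tour_curve ps t = (1 - (u - real (nat \<lfloor>u\<rfloor>))) *\<^sub>R ps ! nat \<lfloor>u\<rfloor>
     + (u - real (nat \<lfloor>u\<rfloor>)) *\<^sub>R ps ! ((nat \<lfloor>u\<rfloor> + 1) mod n)"
    unfolding tour_curve_def Let_def nxt_def n_def u_def by (rule refl)
  show ?thesis
    unfolding d unfolding r unfolding fu n_def[symmetric] nat_mod_suc_aux[OF n, of "\<lfloor>t\<rfloor>"] by (rule refl)
qed


lemma curve_leg:
  assumes "ps \<noteq> []" "of_int k \<le> t" "t \<le> of_int k + 1"
  shows "tour_curve ps t = (1 - (t - of_int k)) *\<^sub>R ps ! nat (k mod int (length ps))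
     + (t - of_int k) *\<^sub>R ps ! nat ((k + 1) mod int (length ps))"
proof (cases "t < of_int k + 1")
  case True
  hence "\<lfloor>t\<rfloor> = k" using assms by (simp add: floor_eq_iff)
  thus ?thesis using curve_floor[OF assms(1), of t] by simp
next
  case False
  hence t: "t = of_int (k + 1)" using assms by simp
  have "\<lfloor>t\<rfloor> = k + 1" unfolding t by simp
  thus ?thesis using curve_floor[OF assms(1), of t] t by simp
qed

lemma curve_period:
  assumes "ps \<noteq> []"
  shows "tour_curve ps (t + of_int m * real (length ps)) = tour_curve ps t"
proof -
  let ?n = "int (length ps)"
  have e: "t + of_int m * real (length ps) = t + of_int (m * ?n)" by simp
  have f: "\<lfloor>t + of_int m * real (length ps)\<rfloor> = \<lfloor>t\<rfloor> + m * ?n"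
    unfolding e by (rule floor_add_int[symmetric])
  have m1: "(\<lfloor>t\<rfloor> + m * ?n) mod ?n = \<lfloor>t\<rfloor> mod ?n" by simp
  have m2: "(\<lfloor>t\<rfloor> + m * ?n + 1) mod ?n = (\<lfloor>t\<rfloor> + 1) mod ?n"
  proof -
    have "\<lfloor>t\<rfloor> + m * ?n + 1 = (\<lfloor>t\<rfloor> + 1) + m * ?n" by simp
    thus ?thesis by (simp only: mod_mult_self1)
  qed
  have r: "t + of_int m * real (length ps) - of_int (\<lfloor>t\<rfloor> + m * ?n) = t - of_int \<lfloor>t\<rfloor>" by simp
  note c1 = curve_floor[OF assms, of "t + of_int m * real (length ps)", unfolded f m1 m2 r]
  note c2 = curve_floor[OF assms, of t]
  show ?thesis by (simp only: c1 c2)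
qed

lemma curve_nat:
  assumes "i < length ps"
  shows "tour_curve ps (real i) = ps ! i"
proof -
  have "ps \<noteq> []" using assms by auto
  from curve_floor[OF this, of "real i"] show ?thesis using assms
    by (simp add: zmod_int)
qed

definition Sarc :: "nat \<Rightarrow> (nat \<Rightarrow> real) \<Rightarrow> int \<Rightarrow> real" where
  "Sarc n f k = of_int (k div int n) * (\<Sum>j<n. f j) + (\<Sum>j<nat (k mod int n). f j)"

definition arcl :: "nat \<Rightarrow> (nat \<Rightarrow> real) \<Rightarrow> real \<Rightarrow> real" where
  "arcl n f t = Sarc n f \<lfloor>t\<rfloor> + (t - of_int \<lfloor>t\<rfloor>) * f (nat (\<lfloor>t\<rfloor> mod int n))"

lemma Sarc_Suc:
  assumes "n > 0"
  shows "Sarc n f (k + 1) = Sarc n f k + f (nat (k mod int n))"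
proof -
  define q where "q = k div int n"
  define r where "r = k mod int n"
  have kq: "k = r + q * int n" unfolding q_def r_def by simp
  have r0: "0 \<le> r" "r < int n" unfolding r_def using assms by simp_all
  have nz: "int n \<noteq> 0" using assms by simp
  show ?thesis
  proof (cases "r + 1 < int n")
    case True
    have e: "k + 1 = (r + 1) + q * int n" using kq by simp
    have d: "(k + 1) div int n = q"
      unfolding e using div_mult_self1[OF nz, of "r+1" q] div_pos_pos_trivial[of "r+1" "int n"] True r0 by simp
    have m: "(k + 1) mod int n = r + 1"
      unfolding e using mod_mult_self1[of "r+1" q "int n"] mod_pos_pos_trivial[of "r+1" "int n"] True r0 by simp
    have "nat (r + 1) = Suc (nat r)" using r0 by simp
    thus ?thesis unfolding Sarc_def d m q_def[symmetric] r_def[symmetric] by simp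
  next
    case False
    hence rr: "r = int n - 1" using r0 by simp
    have e: "k + 1 = 0 + (q + 1) * int n" using kq rr by (simp add: algebra_simps)
    have d: "(k + 1) div int n = q + 1"
      unfolding e using div_mult_self1[OF nz, of 0 "q+1"] by simp
    have m: "(k + 1) mod int n = 0"
      unfolding e using mod_mult_self1[of 0 "q+1" "int n"] by simp
    have nn: "nat r = n - 1" using rr by simp
    have s: "(\<Sum>j<n. f j) = (\<Sum>j<n - 1. f j) + f (n - 1)"
      using assms by (metis Suc_pred' sum.lessThan_Suc)
    show ?thesis unfolding Sarc_def d m q_def[symmetric] r_def[symmetric] nn using s
      by (simp add: algebra_simps)
  qed
qed

lemma Sarc_add_n:
  assumes "n > 0"
  shows "Sarc n f (k + int n) = Sarc n f k + (\<Sum>j<n. f j)"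
proof -
  have d: "(k + int n) div int n = k div int n + 1" using assms by simp
  have m: "(k + int n) mod int n = k mod int n" by simp
  show ?thesis unfolding Sarc_def d m by (simp add: algebra_simps)
qed

lemma arcl_leg:
  assumes "n > 0" "of_int k \<le> t" "t \<le> of_int k + 1"
  shows "arcl n f t = Sarc n f k + (t - of_int k) * f (nat (k mod int n))"
proof (cases "t < of_int k + 1")
  case True
  hence "\<lfloor>t\<rfloor> = k" using assms by (simp add: floor_eq_iff)
  thus ?thesis unfolding arcl_def by simp
next
  case False
  hence t: "t = of_int (k + 1)" using assms by simp
  have "\<lfloor>t\<rfloor> = k + 1" unfolding t by simp
  thus ?thesis unfolding arcl_def using Sarc_Suc[OF assms(1), of f k] t by simp
qed

lemma arcl_period:
  assumes "n > 0"
  shows "arcl n f (t + real n) = arcl n f t + (\<Sum>j<n. f j)"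
proof -
  have f: "\<lfloor>t + real n\<rfloor> = \<lfloor>t\<rfloor> + int n"
    by (metis floor_add_int of_int_of_nat_eq)
  have m: "(\<lfloor>t\<rfloor> + int n) mod int n = \<lfloor>t\<rfloor> mod int n" by simp
  show ?thesis unfolding arcl_def f m Sarc_add_n[OF assms] by simp
qed

lemma arcl_diff:
  "arcl n (\<lambda>j. f j - g j) t = arcl n f t - arcl n g t"
  unfolding arcl_def Sarc_def by (simp add: sum_subtractf algebra_simps)

lemma leg_induct:
  fixes Q :: "real \<Rightarrow> real \<Rightarrow> bool"
  assumes leg: "\<And>k s t. of_int k \<le> s \<Longrightarrow> s \<le> t \<Longrightarrow> t \<le> of_int k + 1 \<Longrightarrow> Q s t"
    and tr: "\<And>s u t. s \<le> u \<Longrightarrow> u \<le> t \<Longrightarrow> Q s u \<Longrightarrow> Q u t \<Longrightarrow> Q s t"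
    and st: "s \<le> t"
  shows "Q s t"
proof -
  have "\<forall>s. s \<le> t \<longrightarrow> nat (\<lfloor>t\<rfloor> - \<lfloor>s\<rfloor>) = m \<longrightarrow> Q s t" for m
  proof (induction m rule: less_induct)
    case (less m)
    show ?case
    proof (intro allI impI)
      fix s assume s: "s \<le> t" "nat (\<lfloor>t\<rfloor> - \<lfloor>s\<rfloor>) = m"
      show "Q s t"
      proof (cases "\<lfloor>t\<rfloor> = \<lfloor>s\<rfloor>")
        case True
        show ?thesis
          by (rule leg[of "\<lfloor>s\<rfloor>"]) (use s True in \<open>auto, linarith\<close>)
      next
        case False
        let ?u = "of_int (\<lfloor>s\<rfloor> + 1) :: real"
        have ft: "\<lfloor>s\<rfloor> \<le> \<lfloor>t\<rfloor>" using s floor_mono by blast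
        hence lt: "\<lfloor>s\<rfloor> < \<lfloor>t\<rfloor>" using False by simp
        have ut: "?u \<le> t" using lt by (metis floor_le_iff le_floor_iff zless_imp_add1_zle of_int_le_iff)
        have su: "s \<le> ?u" by linarith
        have q1: "Q s ?u" by (rule leg[of "\<lfloor>s\<rfloor>"]) (simp_all add: su)
        have "nat (\<lfloor>t\<rfloor> - \<lfloor>?u\<rfloor>) < m" using s lt by (simp only: floor_of_int)
        hence q2: "Q ?u t" using less.IH ut by blast
        show ?thesis by (rule tr[OF su ut q1 q2])
      qed
    qed
  qed
  thus ?thesis using st by blast
qed

definition distf :: "pt list \<Rightarrow> nat \<Rightarrow> real" where
  "distf ps k = dist (ps ! k) (nxt ps k)"
definition hdf :: "pt list \<Rightarrow> nat \<Rightarrow> real" where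
  "hdf ps k = \<bar>fst (ps ! k) - fst (nxt ps k)\<bar>"

lemma comb_diff:
  fixes P Q :: "'a::real_vector"
  shows "((1 - a) *\<^sub>R P + a *\<^sub>R Q) - ((1 - b) *\<^sub>R P + b *\<^sub>R Q) = (b - a) *\<^sub>R (P - Q)"
  by (simp add: algebra_simps)

lemma comb_dist:
  fixes P Q :: "'a::real_normed_vector"
  shows "dist ((1 - a) *\<^sub>R P + a *\<^sub>R Q) ((1 - b) *\<^sub>R P + b *\<^sub>R Q) = \<bar>b - a\<bar> * dist P Q"
  unfolding dist_norm comb_diff by simp

lemma comb_fst:
  fixes P Q :: pt
  shows "fst ((1 - a) *\<^sub>R P + a *\<^sub>R Q) = (1 - a) * fst P + a * fst Q"
  by simp

lemma comb_snd:
  fixes P Q :: pt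
  shows "snd ((1 - a) *\<^sub>R P + a *\<^sub>R Q) = (1 - a) * snd P + a * snd Q"
  by simp

lemma nxt_mod:
  assumes "ps \<noteq> []"
  shows "nxt ps (nat (k mod int (length ps))) = ps ! nat ((k + 1) mod int (length ps))"
  unfolding nxt_def using nat_mod_suc_aux[of "length ps" k] assms by simp

lemma leg_dist:
  assumes "ps \<noteq> []" "of_int k \<le> s" "s \<le> t" "t \<le> of_int k + 1"
  shows "dist (tour_curve ps s) (tour_curve ps t) = (t - s) * distf ps (nat (k mod int (length ps)))"
proof -
  have s1: "s \<le> of_int k + 1" "of_int k \<le> t" using assms by linarith+
  have "dist (tour_curve ps s) (tour_curve ps t) = \<bar>(t - of_int k) - (s - of_int k)\<bar> *
     dist (ps ! nat (k mod int (length ps))) (ps ! nat ((k + 1) mod int (length ps)))"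
    unfolding curve_leg[OF assms(1) assms(2) s1(1)] curve_leg[OF assms(1) s1(2) assms(4)]
    by (rule comb_dist)
  thus ?thesis unfolding distf_def nxt_mod[OF assms(1)] using assms by simp
qed

lemma leg_hdist:
  assumes "ps \<noteq> []" "of_int k \<le> s" "s \<le> t" "t \<le> of_int k + 1"
  shows "\<bar>fst (tour_curve ps s) - fst (tour_curve ps t)\<bar> = (t - s) * hdf ps (nat (k mod int (length ps)))"
proof -
  define P where "P = ps ! nat (k mod int (length ps))"
  define Q where "Q = ps ! nat ((k + 1) mod int (length ps))"
  have s1: "s \<le> of_int k + 1" "of_int k \<le> t" using assms by linarith+
  have "fst (tour_curve ps s) - fst (tour_curve ps t) = (t - s) * (fst P - fst Q)"
    unfolding curve_leg[OF assms(1) assms(2) s1(1)] curve_leg[OF assms(1) s1(2) assms(4)]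
    unfolding P_def[symmetric] Q_def[symmetric] comb_fst by (simp add: algebra_simps)
  hence "\<bar>fst (tour_curve ps s) - fst (tour_curve ps t)\<bar> = (t - s) * \<bar>fst P - fst Q\<bar>"
    using assms by (simp add: abs_mult)
  thus ?thesis unfolding hdf_def nxt_mod[OF assms(1)] P_def Q_def .
qed

lemma leg_snd:
  assumes "ps \<noteq> []" "of_int k \<le> s" "s \<le> t" "t \<le> of_int k + 1"
    and "snd (ps ! nat (k mod int (length ps))) = snd (nxt ps (nat (k mod int (length ps))))"
  shows "snd (tour_curve ps s) = snd (tour_curve ps t)"
proof -
  define P where "P = ps ! nat (k mod int (length ps))"
  define Q where "Q = ps ! nat ((k + 1) mod int (length ps))"
  have PQ: "snd P = snd Q" using assms(5) unfolding nxt_mod[OF assms(1)] P_def Q_def .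
  have s1: "s \<le> of_int k + 1" "of_int k \<le> t" using assms by linarith+
  have "snd (tour_curve ps s) = snd P"
    unfolding curve_leg[OF assms(1) assms(2) s1(1)] P_def[symmetric] Q_def[symmetric] comb_snd PQ
    by (simp add: algebra_simps)
  moreover have "snd (tour_curve ps t) = snd P"
    unfolding curve_leg[OF assms(1) s1(2) assms(4)] P_def[symmetric] Q_def[symmetric] comb_snd PQ
    by (simp add: algebra_simps)
  ultimately show ?thesis by simp
qed

lemma arcl_leg_diff:
  assumes "n > 0" "of_int k \<le> s" "s \<le> t" "t \<le> of_int k + 1"
  shows "arcl n f t - arcl n f s = (t - s) * f (nat (k mod int n))"
  using arcl_leg[OF assms(1), of k s f] arcl_leg[OF assms(1), of k t f] assms
  by (simp add: algebra_simps)

lemma A_bound: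
  assumes "ps \<noteq> []" "s \<le> t"
  shows "dist (tour_curve ps s) (tour_curve ps t) \<le> arcl (length ps) (distf ps) t - arcl (length ps) (distf ps) s"
proof (rule leg_induct[where Q="\<lambda>s t. dist (tour_curve ps s) (tour_curve ps t) \<le> arcl (length ps) (distf ps) t - arcl (length ps) (distf ps) s", OF _ _ assms(2)])
  fix k :: int and s t :: real assume h: "of_int k \<le> s" "s \<le> t" "t \<le> of_int k + 1"
  have n: "length ps > 0" using assms by simp
  show "dist (tour_curve ps s) (tour_curve ps t) \<le> arcl (length ps) (distf ps) t - arcl (length ps) (distf ps) s"
    using leg_dist[OF assms(1) h] arcl_leg_diff[OF n h, of "distf ps"] by simp
next
  fix s u t :: real assume "s \<le> u" "u \<le> t"
    "dist (tour_curve ps s) (tour_curve ps u) \<le> arcl (length ps) (distf ps) u - arcl (length ps) (distf ps) s"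
    "dist (tour_curve ps u) (tour_curve ps t) \<le> arcl (length ps) (distf ps) t - arcl (length ps) (distf ps) u"
  thus "dist (tour_curve ps s) (tour_curve ps t) \<le> arcl (length ps) (distf ps) t - arcl (length ps) (distf ps) s"
    using dist_triangle[of "tour_curve ps s" "tour_curve ps t" "tour_curve ps u"] by linarith
qed

lemma H_bound:
  assumes "ps \<noteq> []" "s \<le> t"
  shows "\<bar>fst (tour_curve ps s) - fst (tour_curve ps t)\<bar> \<le> arcl (length ps) (hdf ps) t - arcl (length ps) (hdf ps) s"
proof (rule leg_induct[where Q="\<lambda>s t. \<bar>fst (tour_curve ps s) - fst (tour_curve ps t)\<bar> \<le> arcl (length ps) (hdf ps) t - arcl (length ps) (hdf ps) s", OF _ _ assms(2)])
  fix k :: int and s t :: real assume h: "of_int k \<le> s" "s \<le> t" "t \<le> of_int k + 1"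
  have n: "length ps > 0" using assms by simp
  show "\<bar>fst (tour_curve ps s) - fst (tour_curve ps t)\<bar> \<le> arcl (length ps) (hdf ps) t - arcl (length ps) (hdf ps) s"
    using leg_hdist[OF assms(1) h] arcl_leg_diff[OF n h, of "hdf ps"] by simp
next
  fix s u t :: real assume "s \<le> u" "u \<le> t"
    "\<bar>fst (tour_curve ps s) - fst (tour_curve ps u)\<bar> \<le> arcl (length ps) (hdf ps) u - arcl (length ps) (hdf ps) s"
    "\<bar>fst (tour_curve ps u) - fst (tour_curve ps t)\<bar> \<le> arcl (length ps) (hdf ps) t - arcl (length ps) (hdf ps) u"
  thus "\<bar>fst (tour_curve ps s) - fst (tour_curve ps t)\<bar> \<le> arcl (length ps) (hdf ps) t - arcl (length ps) (hdf ps) s"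
    by linarith
qed

lemma hdf_le: "hdf ps k \<le> distf ps k"
  unfolding hdf_def distf_def using dist_fst_le[of "ps ! k" "nxt ps k"] by (simp add: dist_real_def)

definition Df :: "pt list \<Rightarrow> real \<Rightarrow> real" where
  "Df ps t = arcl (length ps) (distf ps) t - arcl (length ps) (hdf ps) t"

lemma D_mono:
  assumes "ps \<noteq> []" "s \<le> t"
  shows "Df ps s \<le> Df ps t"
proof (rule leg_induct[where Q="\<lambda>s t. Df ps s \<le> Df ps t", OF _ _ assms(2)])
  fix k :: int and s t :: real assume h: "of_int k \<le> s" "s \<le> t" "t \<le> of_int k + 1"
  have n: "length ps > 0" using assms by simp
  have "0 \<le> (t - s) * (distf ps (nat (k mod int (length ps))) - hdf ps (nat (k mod int (length ps))))"
    using hdf_le[of ps "nat (k mod int (length ps))"] h by simp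
  thus "Df ps s \<le> Df ps t" unfolding Df_def using arcl_leg_diff[OF n h, of "hdf ps"] arcl_leg_diff[OF n h, of "distf ps"]
    by (simp add: algebra_simps)
next
  fix s u t :: real assume "s \<le> u" "u \<le> t" "Df ps s \<le> Df ps u" "Df ps u \<le> Df ps t"
  thus "Df ps s \<le> Df ps t" by linarith
qed

lemma dist_eq_fst_imp:
  fixes P Q :: pt
  assumes "dist P Q = \<bar>fst P - fst Q\<bar>"
  shows "snd P = snd Q"
proof -
  obtain a b c d where P: "P = (a, b)" and Q: "Q = (c, d)" by (cases P, cases Q) auto
  have e: "sqrt ((a - c)\<^sup>2 + (b - d)\<^sup>2) = \<bar>a - c\<bar>"
    using assms unfolding P Q dist_Pair_Pair by (simp add: dist_real_def)
  have "(sqrt ((a - c)\<^sup>2 + (b - d)\<^sup>2))\<^sup>2 = (a - c)\<^sup>2 + (b - d)\<^sup>2"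
    by (rule real_sqrt_pow2) simp
  hence "(a - c)\<^sup>2 + (b - d)\<^sup>2 = (a - c)\<^sup>2" unfolding e by simp
  hence "(b - d)\<^sup>2 = 0" by simp
  thus ?thesis unfolding P Q by simp
qed

lemma D_const:
  assumes "ps \<noteq> []" "s \<le> t"
  shows "Df ps s = Df ps t \<longrightarrow> snd (tour_curve ps s) = snd (tour_curve ps t)"
proof (rule leg_induct[where Q="\<lambda>s t. Df ps s = Df ps t \<longrightarrow> snd (tour_curve ps s) = snd (tour_curve ps t)", OF _ _ assms(2)])
  fix k :: int and s t :: real assume h: "of_int k \<le> s" "s \<le> t" "t \<le> of_int k + 1"
  have n: "length ps > 0" using assms by simp
  show "Df ps s = Df ps t \<longrightarrow> snd (tour_curve ps s) = snd (tour_curve ps t)"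
  proof
    assume e: "Df ps s = Df ps t"
    show "snd (tour_curve ps s) = snd (tour_curve ps t)"
    proof (cases "s = t")
      case True thus ?thesis by simp
    next
      case False
      hence st: "s < t" using h by simp
      let ?j = "nat (k mod int (length ps))"
      have "(t - s) * (distf ps ?j - hdf ps ?j) = 0"
        using e unfolding Df_def using arcl_leg_diff[OF n h, of "hdf ps"] arcl_leg_diff[OF n h, of "distf ps"]
        by (simp add: algebra_simps)
      hence "distf ps ?j = hdf ps ?j" using st by simp
      hence "snd (ps ! ?j) = snd (nxt ps ?j)"
        unfolding distf_def hdf_def by (rule dist_eq_fst_imp)
      thus ?thesis using leg_snd[OF assms(1) h] by simp
    qed
  qed
next
  fix s u t :: real assume h: "s \<le> u" "u \<le> t"
    "Df ps s = Df ps u \<longrightarrow> snd (tour_curve ps s) = snd (tour_curve ps u)"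
    "Df ps u = Df ps t \<longrightarrow> snd (tour_curve ps u) = snd (tour_curve ps t)"
  show "Df ps s = Df ps t \<longrightarrow> snd (tour_curve ps s) = snd (tour_curve ps t)"
  proof
    assume e: "Df ps s = Df ps t"
    have "Df ps s \<le> Df ps u" "Df ps u \<le> Df ps t" using D_mono[OF assms(1)] h by auto
    hence "Df ps s = Df ps u" "Df ps u = Df ps t" using e by linarith+
    thus "snd (tour_curve ps s) = snd (tour_curve ps t)" using h by simp
  qed
qed

lemma A_period:
  assumes "ps \<noteq> []"
  shows "arcl (length ps) (distf ps) (t + real (length ps)) = arcl (length ps) (distf ps) t + tour_cost ps"
  using arcl_period[of "length ps" "distf ps" t] assms unfolding tour_cost_def distf_def by simp

lemma inscribed:
  fixes \<gamma> :: "real \<Rightarrow> pt" and \<Lambda> :: "real \<Rightarrow> real"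
  assumes bd: "\<And>s t. w \<le> s \<Longrightarrow> s \<le> t \<Longrightarrow> t \<le> W \<Longrightarrow> dist (\<gamma> s) (\<gamma> t) \<le> \<Lambda> t - \<Lambda> s"
    and per: "\<gamma> W = \<gamma> w" and T: "finite T" "T \<noteq> {}" "T \<subseteq> {w..W}"
  shows "tour_cost (map \<gamma> (sorted_list_of_set T)) \<le> \<Lambda> W - \<Lambda> w"
proof -
  define xs where "xs = sorted_list_of_set T"
  have srt: "sorted xs" unfolding xs_def by simp
  have set: "set xs = T" unfolding xs_def using T by simp
  have len: "length xs = card T" unfolding xs_def by simp
  have kpos: "length xs > 0" using T len by (simp add: card_gt_0_iff)
  then obtain k' where k: "length xs = Suc k'" by (metis Suc_pred)
  have mem: "\<And>i. i < length xs \<Longrightarrow> xs ! i \<in> {w..W}" using set T(3) nth_mem by blast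
  define g where "g i = dist (\<gamma> (xs ! i)) (\<gamma> (xs ! ((i + 1) mod length xs)))" for i
  have tc: "tour_cost (map \<gamma> xs) = (\<Sum>i<Suc k'. g i)"
    unfolding tour_cost_def nxt_def g_def length_map k[symmetric]
    by (rule sum.cong) (simp_all add: k)
  have s1: "(\<Sum>i<k'. g i) \<le> (\<Sum>i<k'. \<Lambda> (xs ! Suc i) - \<Lambda> (xs ! i))"
  proof (rule sum_mono)
    fix i assume "i \<in> {..<k'}"
    hence i: "Suc i < length xs" using k by simp
    have m: "(i + 1) mod length xs = Suc i" using i by simp
    have le: "xs ! i \<le> xs ! Suc i" using sorted_nth_mono[OF srt _ i] by simp
    show "g i \<le> \<Lambda> (xs ! Suc i) - \<Lambda> (xs ! i)" unfolding g_def m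
      using bd[OF _ le] mem[of i] mem[OF i] i by simp
  qed
  have tel: "(\<Sum>i<k'. \<Lambda> (xs ! Suc i) - \<Lambda> (xs ! i)) = \<Lambda> (xs ! k') - \<Lambda> (xs ! 0)"
    by (rule sum_lessThan_telescope)
  have gk: "g k' = dist (\<gamma> (xs ! k')) (\<gamma> (xs ! 0))" unfolding g_def k by simp
  have m0: "xs ! 0 \<in> {w..W}" "xs ! k' \<in> {w..W}" using mem k by auto
  have "dist (\<gamma> (xs ! k')) (\<gamma> (xs ! 0)) \<le> dist (\<gamma> (xs ! k')) (\<gamma> W) + dist (\<gamma> W) (\<gamma> (xs ! 0))"
    by (rule dist_triangle)
  also have "\<dots> = dist (\<gamma> (xs ! k')) (\<gamma> W) + dist (\<gamma> w) (\<gamma> (xs ! 0))" using per by simp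
  also have "\<dots> \<le> (\<Lambda> W - \<Lambda> (xs ! k')) + (\<Lambda> (xs ! 0) - \<Lambda> w)"
    using bd[of "xs ! k'" W] bd[of w "xs ! 0"] m0 by (intro add_mono) auto
  finally have "g k' \<le> (\<Lambda> W - \<Lambda> (xs ! k')) + (\<Lambda> (xs ! 0) - \<Lambda> w)" unfolding gk .
  hence "tour_cost (map \<gamma> xs) \<le> \<Lambda> W - \<Lambda> w" unfolding tc using s1 tel by simp
  thus ?thesis unfolding xs_def .
qed

lemma seg_fst: "p \<in> seg s \<Longrightarrow> fst p = fst s"
  unfolding seg_def by auto

lemma dist_proj: "dist (fst P, c) (fst Q, c) = \<bar>fst P - fst Q\<bar>"
  unfolding dist_Pair_Pair by (simp add: dist_real_def)

lemma shift_window: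
  assumes n: "n > 0"
  shows "\<exists>m::int. a \<le> x + of_int m * real n \<and> x + of_int m * real n < a + real n"
proof -
  define m where "m = \<lfloor>(x - a) / real n\<rfloor>"
  have l: "of_int m * real n \<le> x - a" unfolding m_def using floor_divide_lower[of "real n" "x - a"] n by simp
  have u: "x - a < (of_int m + 1) * real n" unfolding m_def using floor_divide_upper[of "real n" "x - a"] n by simp
  show ?thesis
    by (rule exI[of _ "-m"]) (use l u in \<open>auto simp: algebra_simps\<close>)
qed

lemma core:
  assumes opt: "is_OPT I ps" and I: "finite I" "I \<noteq> {}"
    and ab: "a \<le> b" "b < a + real (length ps)"
    and ea: "snd (tour_curve ps a) = c" and eb: "snd (tour_curve ps b) = c"
    and hyp: "\<forall>t\<in>{a..b}. \<forall>s\<in>I. tour_curve ps t \<in> seg s \<and> seg s \<inter> {p. snd p = c} = {} \<longrightarrow>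
               (\<exists>t'\<in>{b..a + real (length ps)}. tour_curve ps t' \<in> seg s)"
  shows "tour_curve ps ` {a..b} \<subseteq> {p. snd p = c}"
proof (rule ccontr)
  assume "\<not> ?thesis"
  then obtain t0 where t0: "t0 \<in> {a..b}" "snd (tour_curve ps t0) \<noteq> c" by blast
  have tour: "is_tour I ps" using opt unfolding is_OPT_def by simp
  have ne: "ps \<noteq> []" using tour unfolding is_tour_def by simp
  define n where "n = length ps"
  have n: "n > 0" using ne n_def by simp
  define C where "C = tour_curve ps"
  define A where "A = arcl n (distf ps)"
  define H where "H = arcl n (hdf ps)"
  define W where "W = a + real n"
  define \<gamma> where "\<gamma> t = (if t \<le> b then (fst (C t), c) else C t)" for t
  define \<Lambda> where "\<Lambda> t = (if t \<le> b then H t - H a else H b - H a + A t - A b)" for t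
  have Cb: "(fst (C b), c) = C b" using eb unfolding C_def by (simp add: prod_eq_iff)
  have Ca: "(fst (C a), c) = C a" using ea unfolding C_def by (simp add: prod_eq_iff)
  have CW: "C W = C a" unfolding C_def W_def using curve_period[OF ne, of a 1] n_def by simp
  have Ab: "\<And>s t. s \<le> t \<Longrightarrow> dist (C s) (C t) \<le> A t - A s"
    unfolding C_def A_def n_def using A_bound[OF ne] by blast
  have Hb: "\<And>s t. s \<le> t \<Longrightarrow> dist (fst (C s), c) (fst (C t), c) \<le> H t - H s"
    unfolding C_def H_def n_def dist_proj using H_bound[OF ne] by blast
  have bd: "dist (\<gamma> s) (\<gamma> t) \<le> \<Lambda> t - \<Lambda> s" if st: "a \<le> s" "s \<le> t" "t \<le> W" for s t
  proof (cases "t \<le> b")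
    case True
    hence "s \<le> b" using st by simp
    thus ?thesis unfolding \<gamma>_def \<Lambda>_def using True Hb[OF st(2)] by simp
  next
    case False
    show ?thesis
    proof (cases "s \<le> b")
      case True
      have "dist (fst (C s), c) (C t) \<le> dist (fst (C s), c) (C b) + dist (C b) (C t)"
        by (rule dist_triangle)
      also have "\<dots> \<le> (H b - H s) + (A t - A b)"
        using Hb[OF True] Ab[of b t] False Cb by (intro add_mono) auto
      finally show ?thesis unfolding \<gamma>_def \<Lambda>_def using True False by simp
    next
      case False
      thus ?thesis unfolding \<gamma>_def \<Lambda>_def using \<open>\<not> t \<le> b\<close> Ab[OF st(2)] by simp
    qed
  qed
  have bW: "\<not> W \<le> b" using ab W_def n_def by simp
  have per: "\<gamma> W = \<gamma> a" unfolding \<gamma>_def using bW ab(1) CW Ca by simp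
  have ex: "\<forall>s\<in>I. \<exists>t. a \<le> t \<and> t < W \<and> \<gamma> t \<in> seg s"
  proof
    fix s assume sI: "s \<in> I"
    then obtain p where "p \<in> set ps" "p \<in> seg s" using tour unfolding is_tour_def by blast
    then obtain i where i: "i < n" "ps ! i \<in> seg s" unfolding n_def by (metis in_set_conv_nth)
    obtain m :: int where m: "a \<le> real i + of_int m * real n" "real i + of_int m * real n < a + real n"
      using shift_window[OF n] by blast
    define ti where "ti = real i + of_int m * real n"
    have tiW: "a \<le> ti" "ti < W" using m unfolding ti_def W_def by simp_all
    have "tour_curve ps ti = tour_curve ps (real i)"
      unfolding ti_def n_def by (rule curve_period[OF ne])
    hence Cti: "C ti = ps ! i" unfolding C_def using curve_nat[of i ps] i(1) n_def by simp
    show "\<exists>t. a \<le> t \<and> t < W \<and> \<gamma> t \<in> seg s"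
    proof (cases "ti \<le> b")
      case False
      hence "\<gamma> ti = C ti" unfolding \<gamma>_def by simp
      hence "\<gamma> ti \<in> seg s" using Cti i(2) by simp
      thus ?thesis using tiW by blast
    next
      case True
      show ?thesis
      proof (cases "seg s \<inter> {p. snd p = c} = {}")
        case False
        then obtain q where q: "q \<in> seg s" "snd q = c" by auto
        have "fst (C ti) = fst q" using seg_fst[OF q(1)] seg_fst[OF i(2)] Cti by simp
        hence "(fst (C ti), c) = q" using q(2) by (simp add: prod_eq_iff)
        moreover have "\<gamma> ti = (fst (C ti), c)" unfolding \<gamma>_def using True by simp
        ultimately have "\<gamma> ti \<in> seg s" using q(1) by simp
        thus ?thesis using tiW by blast
      next
        case True2: True
        have "ti \<in> {a..b}" using tiW True by simp
        moreover have "tour_curve ps ti \<in> seg s" using Cti i(2) unfolding C_def by simp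
        ultimately have "\<exists>t'\<in>{b..a + real (length ps)}. tour_curve ps t' \<in> seg s"
          using hyp sI True2 by blast
        then obtain t' where t': "t' \<in> {b..W}" "C t' \<in> seg s"
          unfolding C_def W_def n_def by blast
        have "t' \<noteq> b"
        proof
          assume "t' = b"
          hence "C b \<in> seg s \<inter> {p. snd p = c}" using t'(2) eb unfolding C_def by simp
          thus False using True2 by blast
        qed
        moreover have "t' \<noteq> W"
        proof
          assume "t' = W"
          hence "C a \<in> seg s \<inter> {p. snd p = c}" using t'(2) ea CW unfolding C_def by simp
          thus False using True2 by blast
        qed
        ultimately have bt: "b < t'" "t' < W" using t'(1) by auto
        hence "\<gamma> t' = C t'" unfolding \<gamma>_def by simp
        hence "\<gamma> t' \<in> seg s" using t'(2) by simp
        moreover have "a \<le> t'" using bt ab(1) by simp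
        ultimately show ?thesis using bt by blast
      qed
    qed
  qed
  then obtain tsel where tsel: "\<forall>s\<in>I. a \<le> tsel s \<and> tsel s < W \<and> \<gamma> (tsel s) \<in> seg s"
    using bchoice[OF ex] by blast
  define T where "T = tsel ` I"
  have Tf: "finite T" "T \<noteq> {}" "T \<subseteq> {a..W}" unfolding T_def using I tsel by auto
  define qs where "qs = map \<gamma> (sorted_list_of_set T)"
  have cq: "tour_cost qs \<le> \<Lambda> W - \<Lambda> a"
    unfolding qs_def by (rule inscribed[OF bd per Tf]) auto
  have setq: "set qs = \<gamma> ` T" unfolding qs_def using Tf by simp
  have tq: "is_tour I qs"
    unfolding is_tour_def
  proof (intro conjI ballI)
    show "qs \<noteq> []" using setq Tf by auto
  next
    fix p assume "p \<in> set qs"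
    then obtain s where "s \<in> I" "p = \<gamma> (tsel s)" using setq T_def by auto
    thus "\<exists>s\<in>I. p \<in> seg s" using tsel by auto
  next
    fix s assume "s \<in> I"
    thus "\<exists>p\<in>set qs. p \<in> seg s" using setq T_def tsel by auto
  qed
  have "tour_cost ps \<le> tour_cost qs" using opt tq unfolding is_OPT_def by blast
  have AW: "A W = A a + tour_cost ps" unfolding A_def W_def n_def using A_period[OF ne] by simp
  have LW: "\<Lambda> W - \<Lambda> a = tour_cost ps - (Df ps b - Df ps a)"
    unfolding \<Lambda>_def Df_def using bW ab(1) AW unfolding A_def H_def n_def by simp
  have D1: "Df ps a \<le> Df ps t0" "Df ps t0 \<le> Df ps b" using D_mono[OF ne] t0(1) by auto
  have "Df ps a \<noteq> Df ps t0" using D_const[OF ne, of a t0] t0 ea by auto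
  hence "Df ps a < Df ps b" using D1 by linarith
  thus False using cq LW \<open>tour_cost ps \<le> tour_cost qs\<close> by linarith
qed

lemma seg_iff: "p \<in> seg s \<longleftrightarrow> fst p = fst s \<and> snd s \<le> snd p \<and> snd p \<le> snd s + 1"
proof
  assume "p \<in> seg s" thus "fst p = fst s \<and> snd s \<le> snd p \<and> snd p \<le> snd s + 1"
    unfolding seg_def by auto
next
  assume h: "fst p = fst s \<and> snd s \<le> snd p \<and> snd p \<le> snd s + 1"
  have "p = (fst s, snd s + (snd p - snd s))" using h by (simp add: prod_eq_iff)
  thus "p \<in> seg s" unfolding seg_def using h by (intro CollectI exI[of _ "snd p - snd s"]) simp
qed

lemma img_shift:
  assumes "ps \<noteq> []"
  shows "tour_curve ps ` {x + of_int m * real (length ps) .. y + of_int m * real (length ps)} = tour_curve ps ` {x..y}"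
proof
  show "tour_curve ps ` {x + of_int m * real (length ps)..y + of_int m * real (length ps)} \<subseteq> tour_curve ps ` {x..y}"
  proof
    fix z assume "z \<in> tour_curve ps ` {x + of_int m * real (length ps)..y + of_int m * real (length ps)}"
    then obtain u where u: "u \<in> {x + of_int m * real (length ps)..y + of_int m * real (length ps)}" "z = tour_curve ps u" by blast
    have "tour_curve ps (u + of_int (-m) * real (length ps)) = tour_curve ps u" by (rule curve_period[OF assms])
    moreover have "u + of_int (-m) * real (length ps) \<in> {x..y}" using u(1) by simp
    ultimately show "z \<in> tour_curve ps ` {x..y}" using u(2) by (metis image_eqI)
  qed
next
  show "tour_curve ps ` {x..y} \<subseteq> tour_curve ps ` {x + of_int m * real (length ps)..y + of_int m * real (length ps)}"
  proof
    fix z assume "z \<in> tour_curve ps ` {x..y}"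
    then obtain u where u: "u \<in> {x..y}" "z = tour_curve ps u" by blast
    have "tour_curve ps (u + of_int m * real (length ps)) = tour_curve ps u" by (rule curve_period[OF assms])
    moreover have "u + of_int m * real (length ps) \<in> {x + of_int m * real (length ps)..y + of_int m * real (length ps)}" using u(1) by simp
    ultimately show "z \<in> tour_curve ps ` {x + of_int m * real (length ps)..y + of_int m * real (length ps)}" using u(2) by (metis image_eqI)
  qed
qed

lemma restr_b_lt:
  assumes ne: "ps \<noteq> []" and r: "restr_path ps S a b"
  shows "b < a + real (length ps)"
proof (rule ccontr)
  assume "\<not> ?thesis"
  hence ba: "a + real (length ps) \<le> b" by simp
  have n1: "real (length ps) \<ge> 1" using ne by (simp add: Suc_le_eq)
  have img: "tour_curve ps ` {a..b} \<subseteq> S" using r unfolding restr_path_def by simp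
  have "tour_curve ps ` {a - 1..b} \<subseteq> S"
  proof
    fix z assume "z \<in> tour_curve ps ` {a - 1..b}"
    then obtain u where u: "u \<in> {a - 1..b}" "z = tour_curve ps u" by blast
    show "z \<in> S"
    proof (cases "a \<le> u")
      case True thus ?thesis using u img by auto
    next
      case False
      have "tour_curve ps (u + of_int 1 * real (length ps)) = tour_curve ps u" by (rule curve_period[OF ne])
      moreover have "u + of_int 1 * real (length ps) \<in> {a..b}" using False u(1) ba n1 by simp
      ultimately show ?thesis using u(2) img by (metis image_subset_iff)
    qed
  qed
  moreover have "a - 1 \<le> a" "b \<le> b" by simp_all
  ultimately have "a - 1 = a" using r unfolding restr_path_def by blast
  thus False by simp
qed

lemma excl:
  assumes ne: "ps \<noteq> []" and r: "restr_path ps S a b"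
    and t: "t \<in> {a..b}" "tour_curve ps t \<in> seg s"
    and out: "\<forall>t'\<in>{b..a + real (length ps)}. tour_curve ps t' \<notin> seg s"
  shows "excl_covers ps S a b s"
  unfolding excl_covers_def
proof (intro conjI allI impI)
  show "tour_curve ps ` {a..b} \<inter> seg s \<noteq> {}" using t by blast
next
  fix a' b' assume h: "restr_path ps S a' b' \<and> a' \<noteq> a"
  show "tour_curve ps ` {a'..b'} \<inter> seg s = {}"
  proof (rule ccontr)
    assume "\<not> ?thesis"
    then obtain t' where t': "t' \<in> {a'..b'}" "tour_curve ps t' \<in> seg s" by blast
    define n where "n = length ps"
    have n: "n > 0" using ne n_def by simp
    obtain m :: int where m: "a \<le> t' + of_int m * real n" "t' + of_int m * real n < a + real n"
      using shift_window[OF n] by blast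
    define t2 where "t2 = t' + of_int m * real n"
    have Ct2: "tour_curve ps t2 = tour_curve ps t'" unfolding t2_def n_def by (rule curve_period[OF ne])
    have t2b: "t2 < b"
    proof (rule ccontr)
      assume "\<not> t2 < b"
      hence "t2 \<in> {b..a + real (length ps)}" using m unfolding t2_def n_def by simp
      hence "tour_curve ps t2 \<notin> seg s" using out by blast
      thus False using Ct2 t'(2) by simp
    qed
    define a2 where "a2 = a' + of_int m * real n"
    define b2 where "b2 = b' + of_int m * real n"
    have t2in: "a2 \<le> t2" "t2 \<le> b2" using t'(1) unfolding a2_def b2_def t2_def by simp_all
    have imgab: "tour_curve ps ` {a..b} \<subseteq> S" using r unfolding restr_path_def by simp
    have imga'b': "tour_curve ps ` {a'..b'} \<subseteq> S" using h unfolding restr_path_def by simp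
    have imga2: "tour_curve ps ` {a2..b2} \<subseteq> S" using imga'b' img_shift[OF ne, of a' m b'] unfolding a2_def b2_def n_def by simp
    have "tour_curve ps ` {min a a2..max b b2} \<subseteq> S"
    proof
      fix z assume "z \<in> tour_curve ps ` {min a a2..max b b2}"
      then obtain u where u: "u \<in> {min a a2..max b b2}" "z = tour_curve ps u" by blast
      have "u \<in> {a..b} \<or> u \<in> {a2..b2}" using u(1) t2in t2b m(1) unfolding t2_def[symmetric] by auto
      thus "z \<in> S" using imgab imga2 u(2) by blast
    qed
    hence e1: "min a a2 = a \<and> max b b2 = b" using r unfolding restr_path_def by (meson min.cobounded1 max.cobounded1)
    hence le: "a \<le> a2" "b2 \<le> b" by (simp_all add: min_def max_def split: if_splits)
    have "tour_curve ps ` {a + of_int (-m) * real n..b + of_int (-m) * real n} \<subseteq> S"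
      using imgab img_shift[OF ne, of a "-m" b] unfolding n_def by simp
    moreover have "a + of_int (-m) * real n \<le> a'" "b' \<le> b + of_int (-m) * real n"
      using le unfolding a2_def b2_def by simp_all
    ultimately have "a + of_int (-m) * real n = a'" using h unfolding restr_path_def by blast
    hence am: "a' = a - of_int m * real n" by simp
    have "0 \<le> a" "a < real n" "0 \<le> a'" "a' < real n" using r h unfolding restr_path_def n_def by auto
    hence "\<bar>of_int m * real n\<bar> < real n" using am by simp
    hence "\<bar>of_int m\<bar> * real n < 1 * real n" by (simp add: abs_mult)
    hence "\<bar>of_int m :: real\<bar> < 1" using n by (meson mult_less_cancel_right_pos of_nat_0_less_iff)
    hence "m = 0" by linarith
    thus False using am h by simp
  qed
qed

theorem lemma19:
  fixes I :: "pt set" and ps :: "pt list" and \<tau> :: nat and a b :: real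
  assumes "instance_ok I"
    and "height I > 3"
    and "is_OPT I ps"
    and "\<tau> \<ge> 1"
    and "restr_path ps (strip I \<tau>) a b"
  shows "(loop_on ps (cover_line I (\<tau> + 1)) a b \<longrightarrow>
            (\<exists>s. top_seg I \<tau> s \<and> excl_covers ps (strip I \<tau>) a b s) \<or>
            cover_line_loop ps (cover_line I (\<tau> + 1)) a b)
       \<and> (loop_on ps (cover_line I \<tau>) a b \<longrightarrow>
            (\<exists>s. bottom_seg I \<tau> s \<and> excl_covers ps (strip I \<tau>) a b s) \<or>
            cover_line_loop ps (cover_line I \<tau>) a b)"
proof -
  note opt = assms(3) and r = assms(5)
  have tour: "is_tour I ps" using opt unfolding is_OPT_def by simp
  have ne: "ps \<noteq> []" using tour unfolding is_tour_def by simp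
  have fI: "finite I" "I \<noteq> {}" using assms(1) unfolding instance_ok_def by simp_all
  have blt: "b < a + real (length ps)" by (rule restr_b_lt[OF ne r])
  have ab: "a \<le> b" using r unfolding restr_path_def by simp
  have img: "tour_curve ps ` {a..b} \<subseteq> strip I \<tau>" using r unfolding restr_path_def by simp
  define c0 where "c0 = cover_y I \<tau>"
  define c1 where "c1 = cover_y I (\<tau> + 1)"
  have c10: "c1 = c0 - 1" unfolding c0_def c1_def cover_y_def by simp
  have strip: "strip I \<tau> = {p. c1 \<le> snd p \<and> snd p \<le> c0}" unfolding strip_def c0_def c1_def by simp
  have gen: "\<exists>t\<in>{a..b}. \<exists>s\<in>I. tour_curve ps t \<in> seg s \<and> seg s \<inter> {p. snd p = c} = {} \<and>
              (\<forall>t'\<in>{b..a + real (length ps)}. tour_curve ps t' \<notin> seg s)"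
    if lo: "loop_on ps {p. snd p = c} a b" and nsub: "\<not> tour_curve ps ` {a..b} \<subseteq> {p. snd p = c}" for c
  proof (rule ccontr)
    assume nE: "\<not> (\<exists>t\<in>{a..b}. \<exists>s\<in>I. tour_curve ps t \<in> seg s \<and> seg s \<inter> {p. snd p = c} = {} \<and>
              (\<forall>t'\<in>{b..a + real (length ps)}. tour_curve ps t' \<notin> seg s))"
    have hyp: "\<forall>t\<in>{a..b}. \<forall>s\<in>I. tour_curve ps t \<in> seg s \<and> seg s \<inter> {p. snd p = c} = {} \<longrightarrow>
               (\<exists>t'\<in>{b..a + real (length ps)}. tour_curve ps t' \<in> seg s)"
    proof (intro ballI impI)
      fix t s assume h: "t \<in> {a..b}" "s \<in> I" "tour_curve ps t \<in> seg s \<and> seg s \<inter> {p. snd p = c} = {}"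
      show "\<exists>t'\<in>{b..a + real (length ps)}. tour_curve ps t' \<in> seg s"
      proof (rule ccontr)
        assume "\<not> (\<exists>t'\<in>{b..a + real (length ps)}. tour_curve ps t' \<in> seg s)"
        hence "\<forall>t'\<in>{b..a + real (length ps)}. tour_curve ps t' \<notin> seg s" by simp
        hence "\<exists>t\<in>{a..b}. \<exists>s\<in>I. tour_curve ps t \<in> seg s \<and> seg s \<inter> {p. snd p = c} = {} \<and>
              (\<forall>t'\<in>{b..a + real (length ps)}. tour_curve ps t' \<notin> seg s)"
          using h by (intro bexI[OF _ h(1)] bexI[OF _ h(2)] conjI) simp_all
        thus False using nE by contradiction
      qed
    qed
    have "snd (tour_curve ps a) = c" "snd (tour_curve ps b) = c" using lo unfolding loop_on_def by simp_all
    from core[OF opt fI ab blt this hyp] show False using nsub by contradiction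
  qed
  show ?thesis
  proof (intro conjI impI)
    assume lo: "loop_on ps (cover_line I (\<tau> + 1)) a b"
    have L: "cover_line I (\<tau> + 1) = {p. snd p = c1}" unfolding cover_line_def c1_def by simp
    show "(\<exists>s. top_seg I \<tau> s \<and> excl_covers ps (strip I \<tau>) a b s) \<or>
            cover_line_loop ps (cover_line I (\<tau> + 1)) a b"
    proof (cases "tour_curve ps ` {a..b} \<subseteq> {p. snd p = c1}")
      case True thus ?thesis unfolding cover_line_loop_def L using lo L by simp
    next
      case False
      have "loop_on ps {p. snd p = c1} a b" using lo L by simp
      from gen[OF this False] obtain t where t1: "t \<in> {a..b}" and
        t2: "\<exists>s\<in>I. tour_curve ps t \<in> seg s \<and> seg s \<inter> {p. snd p = c1} = {} \<and>
              (\<forall>t'\<in>{b..a + real (length ps)}. tour_curve ps t' \<notin> seg s)" ..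
      from t2 obtain s where s1: "s \<in> I" and
        s2: "tour_curve ps t \<in> seg s \<and> seg s \<inter> {p. snd p = c1} = {} \<and>
              (\<forall>t'\<in>{b..a + real (length ps)}. tour_curve ps t' \<notin> seg s)" ..
      have ts: "t \<in> {a..b}" "s \<in> I" "tour_curve ps t \<in> seg s"
        "seg s \<inter> {p. snd p = c1} = {}" "\<forall>t'\<in>{b..a + real (length ps)}. tour_curve ps t' \<notin> seg s"
        using t1 s1 s2 by simp_all
      define y where "y = snd (tour_curve ps t)"
      have "tour_curve ps t \<in> {p. c1 \<le> snd p \<and> snd p \<le> c0}" using img ts(1) strip by blast
      hence yS': "c1 \<le> y \<and> y \<le> c0" unfolding y_def by (rule CollectD)
      have yS: "c1 \<le> y" "y \<le> c0" using yS' by blast+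
      note sg = seg_iff[THEN iffD1, OF ts(3)]
      have yseg: "snd s \<le> y" "y \<le> snd s + 1" unfolding y_def using sg by simp_all
      have "(fst s, c1) \<notin> seg s"
      proof
        assume "(fst s, c1) \<in> seg s"
        hence "(fst s, c1) \<in> seg s \<inter> {p. snd p = c1}" by simp
        thus False using ts(4) by simp
      qed
      hence "\<not> (snd s \<le> c1 \<and> c1 \<le> snd s + 1)" unfolding seg_iff by simp
      hence "snd s > c1" using yS yseg by linarith
      hence "(fst s, c0) \<in> seg s" unfolding seg_iff using yS yseg c10 by simp
      moreover have "(fst s, c0) \<in> cover_line I \<tau>" unfolding cover_line_def c0_def by simp
      ultimately have "seg s \<inter> cover_line I \<tau> \<noteq> {}" by blast
      hence "top_seg I \<tau> s" unfolding top_seg_def using ts(2) by simp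
      moreover have "excl_covers ps (strip I \<tau>) a b s" by (rule excl[OF ne r ts(1) ts(3) ts(5)])
      ultimately show ?thesis by blast
    qed
  next
    assume lo: "loop_on ps (cover_line I \<tau>) a b"
    have L: "cover_line I \<tau> = {p. snd p = c0}" unfolding cover_line_def c0_def by simp
    show "(\<exists>s. bottom_seg I \<tau> s \<and> excl_covers ps (strip I \<tau>) a b s) \<or>
            cover_line_loop ps (cover_line I \<tau>) a b"
    proof (cases "tour_curve ps ` {a..b} \<subseteq> {p. snd p = c0}")
      case True thus ?thesis unfolding cover_line_loop_def L using lo L by simp
    next
      case False
      have "loop_on ps {p. snd p = c0} a b" using lo L by simp
      from gen[OF this False] obtain t where t1: "t \<in> {a..b}" and
        t2: "\<exists>s\<in>I. tour_curve ps t \<in> seg s \<and> seg s \<inter> {p. snd p = c0} = {} \<and>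
              (\<forall>t'\<in>{b..a + real (length ps)}. tour_curve ps t' \<notin> seg s)" ..
      from t2 obtain s where s1: "s \<in> I" and
        s2: "tour_curve ps t \<in> seg s \<and> seg s \<inter> {p. snd p = c0} = {} \<and>
              (\<forall>t'\<in>{b..a + real (length ps)}. tour_curve ps t' \<notin> seg s)" ..
      have ts: "t \<in> {a..b}" "s \<in> I" "tour_curve ps t \<in> seg s"
        "seg s \<inter> {p. snd p = c0} = {}" "\<forall>t'\<in>{b..a + real (length ps)}. tour_curve ps t' \<notin> seg s"
        using t1 s1 s2 by simp_all
      define y where "y = snd (tour_curve ps t)"
      have "tour_curve ps t \<in> {p. c1 \<le> snd p \<and> snd p \<le> c0}" using img ts(1) strip by blast
      hence yS': "c1 \<le> y \<and> y \<le> c0" unfolding y_def by (rule CollectD)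
      have yS: "c1 \<le> y" "y \<le> c0" using yS' by blast+
      note sg = seg_iff[THEN iffD1, OF ts(3)]
      have yseg: "snd s \<le> y" "y \<le> snd s + 1" unfolding y_def using sg by simp_all
      have "(fst s, c0) \<notin> seg s"
      proof
        assume "(fst s, c0) \<in> seg s"
        hence "(fst s, c0) \<in> seg s \<inter> {p. snd p = c0}" by simp
        thus False using ts(4) by simp
      qed
      hence "\<not> (snd s \<le> c0 \<and> c0 \<le> snd s + 1)" unfolding seg_iff by simp
      hence top: "snd s + 1 < c0" using yS yseg by linarith
      have "(fst s, c1) \<in> seg s" unfolding seg_iff using yS yseg c10 top by simp
      moreover have "(fst s, c1) \<in> cover_line I (\<tau> + 1)" unfolding cover_line_def c1_def by simp
      ultimately have "seg s \<inter> cover_line I (\<tau> + 1) \<noteq> {}" by blast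
      moreover have "seg s \<inter> cover_line I j = {}" if j: "1 \<le> j" "j < \<tau> + 1" for j
      proof -
        have cj: "cover_y I j \<ge> c0" unfolding cover_y_def c0_def using j by simp
        show ?thesis
        proof (rule ccontr)
          assume "seg s \<inter> cover_line I j \<noteq> {}"
          then obtain p where p: "p \<in> seg s" "snd p = cover_y I j" unfolding cover_line_def by blast
          have "snd p \<le> snd s + 1" using p(1) unfolding seg_iff by simp
          thus False using p(2) top cj by linarith
        qed
      qed
      ultimately have "covered_by I s (\<tau> + 1)" unfolding covered_by_def by simp
      hence "bottom_seg I \<tau> s" unfolding bottom_seg_def using ts(2) by simp
      moreover have "excl_covers ps (strip I \<tau>) a b s" by (rule excl[OF ne r ts(1) ts(3) ts(5)])
      ultimately show ?thesis by blast
    qed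
  qed
qed

end
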